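(* Assume the setting below and that the matrix $\Phi$ is positive definite. Then: (i) $\mathcal V_\Phi:=(\mathrm{Id}+\Phi^{-1}\mathcal B)^{-1}$ is single-valued on $\mathbb{R}^{N(3+2M)}$. (ii) For every $\omega^k=(\beta^k,\psi^k,\sigma^k,z^k,\lambda^k)\in\Omega\times\mathbb{R}^N\times\mathbb{R}^N\times\mathbb{R}^{NM}\times\mathbb{R}^{NM}_+$, the point $\omega^{k+1}$ produced by the iteration (IT) equals $\mathcal V_\Phi\circ\mathcal U_\Phi(\omega^k)$, where $\mathcal U_\Phi:=\mathrm{Id}-\Phi^{-1}\mathcal A$; equivalently, $0\in\mathcal A(\omega^k)+\mathcal B(\omega^{k+1})+\Phi(\omega^{k+1}-\omega^k)$. (iii) A point $\omega^*$ is a fixed point of $\mathcal V_\Phi\circ\mathcal U_\Phi$ (equivalently, a steady state of (IT)) if and only if $0\in(\mathcal A+\mathcal B)(\omega^* )$. (iv) If $\omega^*=(\beta^*,\psi^*,\sigma^*,z^*,\lambda^* )$ satisfies $0\in(\mathcal A+\mathcal B)(\omega^* )$, then $\sigma^*=\frac1N(\mathbf 1^\top\beta^* )\mathbf 1_N$, $\lambda^*=\mathbf 1_N\otimes\gamma_2$ for some $\gamma_2\in\mathbb{R}^M_+$, and $\beta^*$ is a v-GNE of the game, i.e. $\beta^*\in K$ and $(\beta-\beta^* )^\top F(\beta^* )\ge0$ for all $\beta\in K$.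
   Context: Game data: integers $N\ge2$ (aggregators) and $H\ge1$ (lines), $M:=2N+2H$. Reals $r\ge0$, $\alpha>0$, $a_n,b_n>0$, bid bounds $\underline\beta<\bar\beta$, load capacities $\hat x\in\mathbb{R}^N$, line capacities $\hat f\in\mathbb{R}^H_+$, net loads $e\in\mathbb{R}^N$, and a distribution-factor matrix $\Pi\in\mathbb{R}^{H\times N}$. Let $A:=I_N-\frac1N\mathbf 1\mathbf 1^\top$, $c:=\frac rN\mathbf 1_N$, $$\tilde A:=\begin{bmatrix}A\\-A\\-\Pi A\\\Pi A\end{bmatrix}\in\mathbb{R}^{M\times N},\qquad d:=\begin{bmatrix}\hat x-c\\c\\\hat f-\Pi(e-c)\\\hat f+\Pi(e-c)\end{bmatrix}\in\mathbb{R}^M.$$ Let $u_n$ be the $n$-th standard basis vector of $\mathbb{R}^N$, and define $$d_n:=\tfrac1N\big(-c;\ c;\ \hat f+\Pi c;\ \hat f-\Pi c\big)+\big(\hat x_nu_n;\ 0;\ -e_n\Pi u_n;\ e_n\Pi u_n\big),$$ so that $\sum_n d_n=d$. Let $\Omega:=[\underline\beta,\bar\beta]^N$ and $K:=\{\beta\in\Omega:\tilde A\beta\le d\}$. Standing assumption: some $\beta\in\Omega$ satisfies $\tilde A\beta<d$ componentwise. With $C_n'(x)=2a_nx+b_n$, the map $F:\mathbb{R}^N\to\mathbb{R}^N$ is defined by $$F_n(\beta)=\tfrac{N-1}{N}C_n'\big(\tfrac{r-\mathbf 1^\top\beta}{N}+\beta_n\big)+\tfrac{(\mathbf 1^\top\beta-r)(N-2)+N\beta_n}{\alpha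 N^2}$$ (the pseudo-gradient of the aggregators' costs). A v-GNE is a solution of the variational inequality $\mathrm{VI}(K,F)$. The map $\hat F:\mathbb{R}^N\times\mathbb{R}^N\to\mathbb{R}^N$ is defined by $$\hat F_n(\beta,\sigma)=\tfrac{N-1}{N}C_n'\big(\tfrac{r-N\sigma_n}{N}+\beta_n\big)+\tfrac{(N\sigma_n-r)(N-2)+N\beta_n}{\alpha N^2},$$ so that $\hat F(\beta,\frac1N\mathbf 1^\top\beta\,\mathbf 1)=F(\beta)$. Communication: $G$ is a connected undirected graph on $\{1,\dots,N\}$ with positive weights and weighted Laplacian $L$; $L_\sigma:=L$ and $L_\lambda:=L\otimes I_M$. Let $\tilde A_n\in\mathbb{R}^M$ be the $n$-th column of $\tilde A$, $\bar A:=\mathrm{blkdiag}(\tilde A_1,\dots,\tilde A_N)\in\mathbb{R}^{NM\times N}$, and $\bar d:=\mathrm{col}(d_1,\dots,d_N)\in\mathbb{R}^{NM}$. Parameters: $\kappa>0$; $\tau=\mathrm{diag}(\tau_n)$, $\upsilon=\mathrm{diag}(\upsilon_n)$, $\rho=\mathrm{diag}(\rho_n)$ in $\mathbb{R}^{N\times N}$; $\delta=\mathrm{blkdiag}(\delta_nI_M)$, $\eta=\mathrm{blkdiag}(\eta_nI_M)$ in $\mathbb{R}^{NM\times NM}$; all $\tau_n,\upsilon_n,\rho_n,\delta_n,\eta_n>0$. Iteration (IT): $$\begin{aligned} \beta^{k+1}&=\mathrm{proj}_\Omega[\beta^k-\tau(\hat F(\beta^k,\sigma^k)+\bar A^\top\lambda^k)],\\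 \psi^{k+1}&=\psi^k+\upsilon L_\sigma\sigma^k,\\ \sigma^{k+1}&=\sigma^k+\rho\big(\kappa(\beta^k-\sigma^k)-L_\sigma(2\psi^{k+1}-\psi^k)\big),\\ z^{k+1}&=z^k+\delta L_\lambda\lambda^k,\\ \lambda^{k+1}&=\mathrm{proj}_{\mathbb{R}^{NM}_+}\big[\lambda^k-\eta\big(L_\lambda\lambda^k+\bar d-\bar A(2\beta^{k+1}-\beta^k)+L_\lambda(2z^{k+1}-z^k)\big)\big]. \end{aligned}$$ For $\omega=(\beta,\psi,\sigma,z,\lambda)$: $$\mathcal A(\omega):=\big(\hat F(\beta,\sigma),\,0,\,\kappa(\sigma-\beta),\,0,\,\bar d+L_\lambda\lambda\big),$$ $$\mathcal B(\omega):=\big(\mathrm N_\Omega(\beta)+\bar A^\top\lambda,\ -L_\sigma\sigma,\ L_\sigma\psi,\ -L_\lambda\lambda,\ \mathrm N_{\mathbb{R}^{NM}_+}(\lambda)-\bar A\beta+L_\lambda z\big),$$ where $\mathrm N_S$ is the normal cone of $S$ (empty outside $S$). Finally, $$\Phi:=\begin{bmatrix}\tau^{-1}&0&0&0&-\bar A^\top\\0&\upsilon^{-1}&L_\sigma&0&0\\0&L_\sigma&\rho^{-1}&0&0\\0&0&0&\delta^{-1}&L_\lambda\\-\bar A&0&0&L_\lambda&\eta^{-1}\end{bmatrix}.$$ *)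

theory Defs
  imports "HOL-Analysis.Analysis"
begin

text \<open>Aggregators are indexed by a finite type 'n (N = CARD('n)), lines by a finite
type 'h (H = CARD('h)).  The constraint index set of size M = 2N + 2H is the
sum type 'n + 'n + 'h + 'h.  Vectors of R^{NM} are elements of (R^M)^N, i.e.
one block of length M per agent.\<close>

type_synonym ('n,'h) midx = "'n + 'n + 'h + 'h"
type_synonym ('n,'h) state =
  "(real^'n) \<times> (real^'n) \<times> (real^'n) \<times> ((real^('n,'h) midx)^'n) \<times> ((real^('n,'h) midx)^'n)"

definition Omega :: "real \<Rightarrow> real \<Rightarrow> (real^'n) set" where
  "Omega lb ub = {x. \<forall>n. lb \<le> x$n \<and> x$n \<le> ub}"

definition posorth :: "(real^'m^'n) set" where
  "posorth = {x. \<forall>n m. 0 \<le> x$n$m}"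

definition normal_cone :: "('a::real_inner) set \<Rightarrow> 'a \<Rightarrow> 'a set" where
  "normal_cone S x = (if x \<in> S then {g. \<forall>y\<in>S. g \<bullet> (y - x) \<le> 0} else {})"

definition Amat :: "real^'n^'n" where
  "Amat = (\<chi> i j. (if i = j then 1 else 0) - 1 / real CARD('n))"

definition cvec :: "real \<Rightarrow> real^'n" where
  "cvec r = (r / real CARD('n)) *\<^sub>R (1::real^'n)"

definition stack4 :: "real^'n \<Rightarrow> real^'n \<Rightarrow> real^'h \<Rightarrow> real^'h \<Rightarrow> real^('n,'h) midx" where
  "stack4 p q s t = (\<chi> i. case i of Inl k \<Rightarrow> p$k | Inr (Inl k) \<Rightarrow> q$k
                      | Inr (Inr (Inl l)) \<Rightarrow> s$l | Inr (Inr (Inr l)) \<Rightarrow> t$l)"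

definition Atilde :: "real^'n^'h \<Rightarrow> real^'n^('n,'h) midx" where
  "Atilde Pmat = (\<chi> i j. case i of Inl k \<Rightarrow> (Amat::real^'n^'n)$k$j
                   | Inr (Inl k) \<Rightarrow> - ((Amat::real^'n^'n)$k$j)
                   | Inr (Inr (Inl l)) \<Rightarrow> - ((Pmat ** (Amat::real^'n^'n))$l$j)
                   | Inr (Inr (Inr l)) \<Rightarrow> (Pmat ** (Amat::real^'n^'n))$l$j)"

definition dvec :: "real \<Rightarrow> real^'n \<Rightarrow> real^'h \<Rightarrow> real^'n \<Rightarrow> real^'n^'h \<Rightarrow> real^('n,'h) midx" where
  "dvec r xhat fhat e Pmat =
     stack4 (xhat - cvec r) (cvec r) (fhat - Pmat *v (e - cvec r)) (fhat + Pmat *v (e - cvec r))"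

definition dloc :: "real \<Rightarrow> real^'n \<Rightarrow> real^'h \<Rightarrow> real^'n \<Rightarrow> real^'n^'h \<Rightarrow> 'n \<Rightarrow> real^('n,'h) midx" where
  "dloc r xhat fhat e Pmat n =
     (1 / real CARD('n)) *\<^sub>R stack4 (- cvec r) (cvec r) (fhat + Pmat *v cvec r) (fhat - Pmat *v cvec r)
     + stack4 ((xhat$n) *\<^sub>R axis n 1) 0 (- ((e$n) *\<^sub>R (Pmat *v axis n 1))) ((e$n) *\<^sub>R (Pmat *v axis n 1))"

definition dbar :: "real \<Rightarrow> real^'n \<Rightarrow> real^'h \<Rightarrow> real^'n \<Rightarrow> real^'n^'h \<Rightarrow> (real^('n,'h) midx)^'n" where
  "dbar r xhat fhat e Pmat = (\<chi> n. dloc r xhat fhat e Pmat n)"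

definition Kset :: "real \<Rightarrow> real \<Rightarrow> real \<Rightarrow> real^'n \<Rightarrow> real^'h \<Rightarrow> real^'n \<Rightarrow> real^'n^'h \<Rightarrow> (real^'n) set" where
  "Kset lb ub r xhat fhat e Pmat =
     {x \<in> Omega lb ub. \<forall>i. (Atilde Pmat *v x)$i \<le> dvec r xhat fhat e Pmat $ i}"

definition Cd :: "real^'n \<Rightarrow> real^'n \<Rightarrow> 'n \<Rightarrow> real \<Rightarrow> real" where
  "Cd a b n x = 2 * a$n * x + b$n"

definition Fgame :: "real \<Rightarrow> real \<Rightarrow> real^'n \<Rightarrow> real^'n \<Rightarrow> real^'n \<Rightarrow> real^'n" where
  "Fgame r alpha a b x = (let N = real CARD('n); s = (\<Sum>i\<in>UNIV. x$i) in
     (\<chi> n. (N - 1) / N * Cd a b n ((r - s) / N + x$n)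
            + ((s - r) * (N - 2) + N * x$n) / (alpha * N^2)))"

definition Fhat :: "real \<Rightarrow> real \<Rightarrow> real^'n \<Rightarrow> real^'n \<Rightarrow> real^'n \<Rightarrow> real^'n \<Rightarrow> real^'n" where
  "Fhat r alpha a b x sg = (let N = real CARD('n) in
     (\<chi> n. (N - 1) / N * Cd a b n ((r - N * sg$n) / N + x$n)
            + ((N * sg$n - r) * (N - 2) + N * x$n) / (alpha * N^2)))"

definition vGNE :: "real \<Rightarrow> real \<Rightarrow> real \<Rightarrow> real \<Rightarrow> real^'n \<Rightarrow> real^'n \<Rightarrow> real^'n \<Rightarrow> real^'h
                    \<Rightarrow> real^'n \<Rightarrow> real^'n^'h \<Rightarrow> real^'n \<Rightarrow> bool" where
  "vGNE lb ub r alpha a b xhat fhat e Pmat x \<longleftrightarrow>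
     x \<in> Kset lb ub r xhat fhat e Pmat \<and>
     (\<forall>y \<in> Kset lb ub r xhat fhat e Pmat. 0 \<le> (y - x) \<bullet> Fgame r alpha a b x)"

text \<open>Weighted Laplacian of a weighted graph given by weights w (w i j > 0 iff edge),
applied blockwise (L \<otimes> I) when the entries are vectors.\<close>
definition Lap :: "('n::finite \<Rightarrow> 'n \<Rightarrow> real) \<Rightarrow> ('a::real_vector)^'n \<Rightarrow> 'a^'n" where
  "Lap w x = (\<chi> i. \<Sum>j\<in>UNIV. w i j *\<^sub>R (x$i - x$j))"

definition connected_weighted_graph :: "('n \<Rightarrow> 'n \<Rightarrow> real) \<Rightarrow> bool" where
  "connected_weighted_graph w \<longleftrightarrow>
     (\<forall>i j. w i j = w j i) \<and> (\<forall>i j. 0 \<le> w i j) \<and>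
     (\<forall>i j. (i, j) \<in> {(p, q). 0 < w p q}\<^sup>*)"

definition Abar :: "real^'n^'h \<Rightarrow> real^'n \<Rightarrow> (real^('n,'h) midx)^'n" where
  "Abar Pmat x = (\<chi> n. x$n *\<^sub>R column n (Atilde Pmat))"

definition AbarT :: "real^'n^'h \<Rightarrow> (real^('n,'h) midx)^'n \<Rightarrow> real^'n" where
  "AbarT Pmat y = (\<chi> n. column n (Atilde Pmat) \<bullet> y$n)"

definition dsc :: "real^'n \<Rightarrow> ('a::real_vector)^'n \<Rightarrow> 'a^'n" where
  "dsc t v = (\<chi> n. t$n *\<^sub>R v$n)"

definition vinv :: "real^'n \<Rightarrow> real^'n" where
  "vinv t = (\<chi> n. inverse (t$n))"

definition opA :: "real \<Rightarrow> real \<Rightarrow> real^'n \<Rightarrow> real^'n \<Rightarrow> real^'n \<Rightarrow> real^'h \<Rightarrow> real^'n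
                   \<Rightarrow> real^'n^'h \<Rightarrow> ('n \<Rightarrow> 'n \<Rightarrow> real) \<Rightarrow> real \<Rightarrow> ('n,'h) state \<Rightarrow> ('n,'h) state" where
  "opA r alpha a b xhat fhat e Pmat w kappa om = (case om of (x, psi, sg, z, lam) \<Rightarrow>
     (Fhat r alpha a b x sg, 0, kappa *\<^sub>R (sg - x), 0, dbar r xhat fhat e Pmat + Lap w lam))"

definition opB :: "real \<Rightarrow> real \<Rightarrow> real^'n^'h \<Rightarrow> ('n \<Rightarrow> 'n \<Rightarrow> real)
                   \<Rightarrow> ('n::finite,'h::finite) state \<Rightarrow> ('n,'h) state set" where
  "opB lb ub Pmat w om = (case om of (x, psi, sg, z, lam) \<Rightarrow>
     {(g + AbarT Pmat lam, - Lap w sg, Lap w psi, - Lap w lam, h - Abar Pmat x + Lap w z) | g h.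
        g \<in> normal_cone (Omega lb ub) x \<and> h \<in> normal_cone posorth lam})"

definition PhiM :: "real^'n^'h \<Rightarrow> ('n \<Rightarrow> 'n \<Rightarrow> real) \<Rightarrow> real^'n \<Rightarrow> real^'n \<Rightarrow> real^'n \<Rightarrow> real^'n
                    \<Rightarrow> real^'n \<Rightarrow> ('n::finite,'h::finite) state \<Rightarrow> ('n,'h) state" where
  "PhiM Pmat w tau ups rho delta eta om = (case om of (x, psi, sg, z, lam) \<Rightarrow>
     (dsc (vinv tau) x - AbarT Pmat lam,
      dsc (vinv ups) psi + Lap w sg,
      Lap w psi + dsc (vinv rho) sg,
      dsc (vinv delta) z + Lap w lam,
      - Abar Pmat x + Lap w z + dsc (vinv eta) lam))"

text \<open>Forward operator U_Phi = Id - Phi^{-1} A and backward (resolvent) operator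
V_Phi = (Id + Phi^{-1} B)^{-1}, the latter as a set-valued map.\<close>
definition fwdU :: "('s \<Rightarrow> 's) \<Rightarrow> ('s \<Rightarrow> 's) \<Rightarrow> 's::ab_group_add \<Rightarrow> 's" where
  "fwdU P A om = om - inv P (A om)"

definition resV :: "('s \<Rightarrow> 's) \<Rightarrow> ('s \<Rightarrow> 's set) \<Rightarrow> 's::ab_group_add \<Rightarrow> 's set" where
  "resV P B x = {y. x \<in> (\<lambda>g. y + inv P g) ` B y}"

definition IT_step :: "real \<Rightarrow> real \<Rightarrow> real \<Rightarrow> real \<Rightarrow> real^'n \<Rightarrow> real^'n \<Rightarrow> real^'n \<Rightarrow> real^'h
     \<Rightarrow> real^'n \<Rightarrow> real^'n^'h \<Rightarrow> ('n \<Rightarrow> 'n \<Rightarrow> real) \<Rightarrow> real \<Rightarrow> real^'n \<Rightarrow> real^'n \<Rightarrow> real^'n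
     \<Rightarrow> real^'n \<Rightarrow> real^'n \<Rightarrow> ('n::finite,'h::finite) state \<Rightarrow> ('n,'h) state" where
  "IT_step lb ub r alpha a b xhat fhat e Pmat w kappa tau ups rho delta eta om =
     (case om of (x, psi, sg, z, lam) \<Rightarrow>
       let x' = closest_point (Omega lb ub) (x - dsc tau (Fhat r alpha a b x sg + AbarT Pmat lam));
           psi' = psi + dsc ups (Lap w sg);
           sg' = sg + dsc rho (kappa *\<^sub>R (x - sg) - Lap w (2 *\<^sub>R psi' - psi));
           z' = z + dsc delta (Lap w lam);
           lam' = closest_point posorth
                    (lam - dsc eta (Lap w lam + dbar r xhat fhat e Pmat
                                     - Abar Pmat (2 *\<^sub>R x' - x) + Lap w (2 *\<^sub>R z' - z)))
       in (x', psi', sg', z', lam'))"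

end

theory Submission imports Defs begin

lemma Lap_add: "Lap w (x + y) = Lap w x + Lap w y"
  unfolding Lap_def vec_eq_iff
  by (auto simp flip: sum.distrib intro!: sum.cong simp: algebra_simps)
lemma Lap_diff: "Lap w (x - y) = Lap w x - Lap w y"
  unfolding Lap_def vec_eq_iff
  by (auto simp flip: sum_subtractf intro!: sum.cong simp: algebra_simps)
lemma Lap_scaleR: "Lap w (c *\<^sub>R x) = c *\<^sub>R Lap w x"
  by (simp add: Lap_def vec_eq_iff scaleR_sum_right scaleR_diff_right algebra_simps)
lemma Lap_minus: "Lap w (- x) = - Lap w x"
  unfolding Lap_def vec_eq_iff
  by (auto simp flip: sum_negf intro!: sum.cong simp: algebra_simps)
lemma Lap_zero: "Lap w 0 = 0"
  by (simp add: Lap_def vec_eq_iff)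

lemma dsc_nth: "dsc t v $ n = t$n *\<^sub>R v$n" by (simp add: dsc_def)
lemma vinv_nth: "vinv t $ n = inverse (t$n)" by (simp add: vinv_def)
lemma dsc_add: "dsc t (x + y) = dsc t x + dsc t y"
  by (simp add: dsc_def vec_eq_iff scaleR_right_distrib)
lemma dsc_diff: "dsc t (x - y) = dsc t x - dsc t y"
  by (simp add: dsc_def vec_eq_iff scaleR_diff_right)
lemma dsc_scaleR: "dsc t (c *\<^sub>R x) = c *\<^sub>R dsc t x"
  by (simp add: dsc_def vec_eq_iff)
lemma dsc_minus: "dsc t (- x) = - dsc t x"
  by (simp add: dsc_def vec_eq_iff)

lemma Abar_add: "Abar P (x + y) = Abar P x + Abar P y"
  by (simp add: Abar_def vec_eq_iff algebra_simps)
lemma Abar_diff: "Abar P (x - y) = Abar P x - Abar P y"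
  by (simp add: Abar_def vec_eq_iff algebra_simps)
lemma Abar_scaleR: "Abar P (c *\<^sub>R x) = c *\<^sub>R Abar P x"
  by (simp add: Abar_def vec_eq_iff algebra_simps)
lemma Abar_minus: "Abar P (- x) = - Abar P x"
  by (simp add: Abar_def vec_eq_iff algebra_simps)
lemma AbarT_add: "AbarT P (x + y) = AbarT P x + AbarT P y"
  by (simp add: AbarT_def vec_eq_iff inner_add_right)
lemma AbarT_diff: "AbarT P (x - y) = AbarT P x - AbarT P y"
  by (simp add: AbarT_def vec_eq_iff inner_diff_right)
lemma AbarT_scaleR: "AbarT P (c *\<^sub>R x) = c *\<^sub>R AbarT P x"
  by (simp add: AbarT_def vec_eq_iff)
lemma AbarT_minus: "AbarT P (- x) = - AbarT P x"
  by (simp add: AbarT_def vec_eq_iff)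

lemma dsc_zero: "dsc t 0 = 0" by (simp add: dsc_def vec_eq_iff)

lemmas lin_simps = dsc_zero Lap_add Lap_diff Lap_scaleR Lap_minus Lap_zero dsc_add dsc_diff dsc_scaleR dsc_minus
  Abar_add Abar_diff Abar_scaleR Abar_minus AbarT_add AbarT_diff AbarT_scaleR AbarT_minus

lemma PhiM_linear:
  fixes Pmat :: "real^'n::finite^'h::finite"
  shows "linear (PhiM Pmat w tau ups rho delta eta)"
proof (rule linearI)
  fix u v :: "('n::finite,'h::finite) state"
  show "PhiM Pmat w tau ups rho delta eta (u + v) = PhiM Pmat w tau ups rho delta eta u + PhiM Pmat w tau ups rho delta eta v"
    by (cases u; cases v) (simp add: PhiM_def lin_simps algebra_simps)
next
  fix c :: real and u :: "('n::finite,'h::finite) state"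
  show "PhiM Pmat w tau ups rho delta eta (c *\<^sub>R u) = c *\<^sub>R PhiM Pmat w tau ups rho delta eta u"
    by (cases u) (simp add: PhiM_def lin_simps algebra_simps)
qed

lemma NC_Omega: "g \<in> normal_cone (Omega lb ub) y \<longleftrightarrow>
   y \<in> Omega lb ub \<and> (\<forall>n s. lb \<le> s \<and> s \<le> ub \<longrightarrow> g$n * (s - y$n) \<le> 0)"
proof
  assume g: "g \<in> normal_cone (Omega lb ub) y"
  then have y: "y \<in> Omega lb ub" by (simp add: normal_cone_def split: if_splits)
  have "g$n * (s - y$n) \<le> 0" if "lb \<le> s" "s \<le> ub" for n s
  proof -
    let ?z = "(\<chi> i. if i = n then s else y$i)"
    have "?z \<in> Omega lb ub" using y that by (auto simp: Omega_def)
    then have "g \<bullet> (?z - y) \<le> 0" using g y by (simp add: normal_cone_def)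
    moreover have "?z - y = (s - y$n) *\<^sub>R axis n 1"
      by (simp add: vec_eq_iff axis_def)
    then have "g \<bullet> (?z - y) = g$n * (s - y$n)"
      by (simp add: inner_axis)
    ultimately show ?thesis by simp
  qed
  with y show "y \<in> Omega lb ub \<and> (\<forall>n s. lb \<le> s \<and> s \<le> ub \<longrightarrow> g$n * (s - y$n) \<le> 0)" by blast
next
  assume h: "y \<in> Omega lb ub \<and> (\<forall>n s. lb \<le> s \<and> s \<le> ub \<longrightarrow> g$n * (s - y$n) \<le> 0)"
  show "g \<in> normal_cone (Omega lb ub) y"
    unfolding normal_cone_def using h
    by (auto simp: inner_vec_def Omega_def intro!: sum_nonpos)
qed

lemma NC_pos: "h \<in> normal_cone posorth l \<longleftrightarrow>
   l \<in> posorth \<and> (\<forall>n m s. 0 \<le> s \<longrightarrow> h$n$m * (s - l$n$m) \<le> 0)"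
proof
  assume g: "h \<in> normal_cone posorth l"
  then have y: "l \<in> posorth" by (simp add: normal_cone_def split: if_splits)
  have "h$n$m * (s - l$n$m) \<le> 0" if "0 \<le> s" for n m s
  proof -
    let ?z = "(\<chi> i j. if i = n \<and> j = m then s else l$i$j)"
    have "?z \<in> posorth" using y that by (auto simp: posorth_def)
    then have "h \<bullet> (?z - l) \<le> 0" using g y by (simp add: normal_cone_def)
    moreover have "?z - l = axis n ((s - l$n$m) *\<^sub>R axis m 1)"
      by (simp add: vec_eq_iff axis_def)
    then have "h \<bullet> (?z - l) = h$n$m * (s - l$n$m)"
      by (simp add: inner_axis)
    ultimately show ?thesis by simp
  qed
  with y show "l \<in> posorth \<and> (\<forall>n m s. 0 \<le> s \<longrightarrow> h$n$m * (s - l$n$m) \<le> 0)" by blast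
next
  assume h: "l \<in> posorth \<and> (\<forall>n m s. 0 \<le> s \<longrightarrow> h$n$m * (s - l$n$m) \<le> 0)"
  show "h \<in> normal_cone posorth l"
    unfolding normal_cone_def using h
    by (auto simp: inner_vec_def posorth_def intro!: sum_nonpos)
qed


lemma proj_char:
  fixes S :: "'a::euclidean_space set"
  assumes "closed S" "convex S" "S \<noteq> {}"
  shows "(u - y) \<in> normal_cone S y \<longleftrightarrow> y = closest_point S u"
proof
  assume h: "u - y \<in> normal_cone S y"
  then have y: "y \<in> S" by (simp add: normal_cone_def split: if_splits)
  let ?p = "closest_point S u"
  have p: "?p \<in> S" using closest_point_in_set assms by blast
  have 1: "(u - y) \<bullet> (?p - y) \<le> 0" using h y p by (simp add: normal_cone_def)
  have 2: "(u - ?p) \<bullet> (y - ?p) \<le> 0" using closest_point_dot[OF assms(2,1) y] .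
  have "(?p - y) \<bullet> (?p - y) \<le> 0"
    using 1 2 by (simp add: inner_diff_left inner_diff_right inner_commute)
  then have "(?p - y) \<bullet> (?p - y) = 0" using inner_ge_zero[of "?p - y"] by linarith
  then show "y = ?p" by simp
next
  assume "y = closest_point S u"
  then show "u - y \<in> normal_cone S y"
    using closest_point_in_set[OF assms(1,3)] closest_point_dot[OF assms(2,1)]
    by (auto simp: normal_cone_def)
qed

lemma Omega_cbox: "Omega lb ub = cbox (vec lb) (vec ub)"
  by (auto simp: Omega_def mem_box_cart)

lemma Omega_props: "lb \<le> ub \<Longrightarrow> closed (Omega lb ub) \<and> convex (Omega lb ub) \<and> Omega lb ub \<noteq> {}"
proof (intro conjI)
  assume "lb \<le> ub"
  then have "vec lb \<in> Omega lb ub" by (simp add: Omega_def)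
  then show "Omega lb ub \<noteq> {}" by blast
qed (auto simp: Omega_cbox intro: closed_cbox convex_box)

lemma posorth_props: "closed (posorth::(real^'m::finite^'n::finite) set) \<and> convex (posorth::(real^'m^'n) set) \<and> (posorth::(real^'m^'n) set) \<noteq> {}"
proof (intro conjI)
  have "posorth = (\<Inter>n. \<Inter>m. {x::real^'m^'n. 0 \<le> x$n$m})" by (auto simp: posorth_def)
  moreover have "closed {x::real^'m^'n. 0 \<le> x$n$m}" for n m by (intro closed_Collect_le continuous_intros)
  ultimately show "closed (posorth::(real^'m^'n) set)" by (metis (no_types, lifting) closed_INT)
  show "convex (posorth::(real^'m^'n) set)"
    unfolding convex_def posorth_def by (auto intro!: add_nonneg_nonneg)
  have "(0::real^'m^'n) \<in> posorth" by (simp add: posorth_def)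
  then show "(posorth::(real^'m^'n) set) \<noteq> {}" by blast
qed

lemma pos_mult_le0: "0 < (t::real) \<Longrightarrow> (t * X \<le> 0) = (X \<le> 0)"
  using mult_le_cancel_left_pos[of t X 0] by simp

lemma NC_Omega_dsc: "\<forall>n. t$n > 0 \<Longrightarrow> dsc t g \<in> normal_cone (Omega lb ub) y \<longleftrightarrow> g \<in> normal_cone (Omega lb ub) y"
  unfolding NC_Omega by (simp add: dsc_nth mult.assoc pos_mult_le0)

lemma NC_pos_dsc: "\<forall>n. t$n > 0 \<Longrightarrow> dsc t g \<in> normal_cone posorth y \<longleftrightarrow> g \<in> normal_cone posorth y"
  unfolding NC_pos by (simp add: dsc_nth mult.assoc pos_mult_le0)

lemma vinv_pos: "\<forall>n. t$n > 0 \<Longrightarrow> \<forall>n. vinv t $ n > 0" by (simp add: vinv_nth)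

lemma proj_Omega: "\<forall>n. t$n > 0 \<Longrightarrow> lb \<le> ub \<Longrightarrow>
  dsc (vinv t) (u - y) \<in> normal_cone (Omega lb ub) y \<longleftrightarrow> y = closest_point (Omega lb ub) u"
  using NC_Omega_dsc[OF vinv_pos] proj_char Omega_props by metis

lemma proj_pos: "\<forall>n. t$n > 0 \<Longrightarrow>
  dsc (vinv t) (u - y) \<in> normal_cone posorth y \<longleftrightarrow> y = closest_point posorth u"
  using NC_pos_dsc[OF vinv_pos] proj_char posorth_props by metis

lemma dsc_vinv: "\<forall>n. t$n > 0 \<Longrightarrow> dsc (vinv t) (dsc t (v::'a::real_vector^'n::finite)) = v"
  by (simp add: vec_eq_iff dsc_nth vinv_nth less_imp_neq[symmetric])
lemma dsc_vinv2: "\<forall>n. t$n > 0 \<Longrightarrow> dsc t (dsc (vinv t) (v::'a::real_vector^'n::finite)) = v"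
  by (simp add: vec_eq_iff dsc_nth vinv_nth less_imp_neq[symmetric])


definition Gstep :: "real \<Rightarrow> real \<Rightarrow> real^'n^'h \<Rightarrow> ('n \<Rightarrow> 'n \<Rightarrow> real) \<Rightarrow> real^'n \<Rightarrow> real^'n \<Rightarrow> real^'n
     \<Rightarrow> real^'n \<Rightarrow> real^'n \<Rightarrow> ('n::finite,'h::finite) state \<Rightarrow> ('n,'h) state \<Rightarrow> ('n,'h) state" where
  "Gstep lb ub Pmat w tau ups rho delta eta om c =
     (case om of (x, psi, sg, z, lam) \<Rightarrow> case c of (c1, c2, c3, c4, c5) \<Rightarrow>
       let x' = closest_point (Omega lb ub) (x - dsc tau (c1 + AbarT Pmat lam));
           psi' = psi - dsc ups (c2 - Lap w sg);
           sg' = sg - dsc rho (c3 + Lap w (2 *\<^sub>R psi' - psi));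
           z' = z - dsc delta (c4 - Lap w lam);
           lam' = closest_point posorth
                    (lam - dsc eta (c5 - Abar Pmat (2 *\<^sub>R x' - x) + Lap w (2 *\<^sub>R z' - z)))
       in (x', psi', sg', z', lam'))"

lemma dsc_solve:
  fixes a b d :: "'a::real_vector^'n::finite"
  assumes "\<forall>n. t$n > 0"
  shows "dsc (vinv t) (a - b) = d \<longleftrightarrow> b = a - dsc t d"
proof
  assume "dsc (vinv t) (a - b) = d"
  then have "dsc t (dsc (vinv t) (a - b)) = dsc t d" by simp
  then have "a - b = dsc t d" by (simp only: dsc_vinv2[OF assms])
  then show "b = a - dsc t d" by (simp add: algebra_simps)
next
  assume "b = a - dsc t d"
  then show "dsc (vinv t) (a - b) = d" using dsc_vinv[OF assms] by simp
qed


lemma opB_mem: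
  "(a1, a2, a3, a4, a5) \<in> opB lb ub P w (x', psi', sg', z', lam') \<longleftrightarrow>
    a1 - AbarT P lam' \<in> normal_cone (Omega lb ub) x' \<and> a2 = - Lap w sg' \<and> a3 = Lap w psi'
    \<and> a4 = - Lap w lam' \<and> a5 + Abar P x' - Lap w z' \<in> normal_cone posorth lam'"
  apply (auto simp: opB_def)
  apply (rule_tac x="a1 - AbarT P lam'" in exI)
  apply simp
  apply (rule_tac x="a5 + Abar P x' - Lap w z'" in exI)
  apply simp
  done

lemma KEY:
  fixes P :: "real^'n::finite^'h::finite"
  assumes pos: "\<forall>n. tau$n > 0" "\<forall>n. ups$n > 0" "\<forall>n. rho$n > 0" "\<forall>n. delta$n > 0" "\<forall>n. eta$n > 0"
    and lu: "lb \<le> ub"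
  shows "PhiM P w tau ups rho delta eta (om - y) - c \<in> opB lb ub P w y
     \<longleftrightarrow> y = Gstep lb ub P w tau ups rho delta eta om c"
proof -
  obtain x psi sg z lam where om: "om = (x, psi, sg, z, lam)" by (cases om) auto
  obtain x' psi' sg' z' lam' where y: "y = (x', psi', sg', z', lam')" by (cases y) auto
  obtain c1 c2 c3 c4 c5 where c: "c = (c1, c2, c3, c4, c5)" by (cases c) auto
  have e1: "dsc (vinv tau) (x - x') - AbarT P (lam - lam') - c1 - AbarT P lam'
      = dsc (vinv tau) ((x - dsc tau (c1 + AbarT P lam)) - x')"
    by (simp add: lin_simps dsc_vinv[OF pos(1)] algebra_simps)
  have C1: "dsc (vinv tau) (x - x') - AbarT P (lam - lam') - c1 - AbarT P lam' \<in> normal_cone (Omega lb ub) x'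
     \<longleftrightarrow> x' = closest_point (Omega lb ub) (x - dsc tau (c1 + AbarT P lam))"
    unfolding e1 using proj_Omega[OF pos(1) lu] .
  have C2: "dsc (vinv ups) (psi - psi') + Lap w (sg - sg') - c2 = - Lap w sg'
     \<longleftrightarrow> psi' = psi - dsc ups (c2 - Lap w sg)"
  proof -
    have "dsc (vinv ups) (psi - psi') + Lap w (sg - sg') - c2 = - Lap w sg'
       \<longleftrightarrow> dsc (vinv ups) (psi - psi') = c2 - Lap w sg"
      by (auto simp: lin_simps algebra_simps)
    then show ?thesis using dsc_solve[OF pos(2)] by simp
  qed
  have C3: "Lap w (psi - psi') + dsc (vinv rho) (sg - sg') - c3 = Lap w psi'
     \<longleftrightarrow> sg' = sg - dsc rho (c3 + Lap w (2 *\<^sub>R psi' - psi))"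
  proof -
    have "Lap w (psi - psi') + dsc (vinv rho) (sg - sg') - c3 = Lap w psi'
       \<longleftrightarrow> dsc (vinv rho) (sg - sg') = c3 + Lap w (2 *\<^sub>R psi' - psi)"
      unfolding vec_eq_iff apply (simp add: lin_simps)
      by (intro iffI allI; erule_tac x=i in allE; linarith)
    then show ?thesis using dsc_solve[OF pos(3)] by simp
  qed
  have C4: "dsc (vinv delta) (z - z') + Lap w (lam - lam') - c4 = - Lap w lam'
     \<longleftrightarrow> z' = z - dsc delta (c4 - Lap w lam)"
  proof -
    have "dsc (vinv delta) (z - z') + Lap w (lam - lam') - c4 = - Lap w lam'
       \<longleftrightarrow> dsc (vinv delta) (z - z') = c4 - Lap w lam"
      by (auto simp: lin_simps algebra_simps)
    then show ?thesis using dsc_solve[OF pos(4)] by simp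
  qed
  have e5: "- Abar P (x - x') + Lap w (z - z') + dsc (vinv eta) (lam - lam') - c5 + Abar P x' - Lap w z'
     = dsc (vinv eta) ((lam - dsc eta (c5 - Abar P (2 *\<^sub>R x' - x) + Lap w (2 *\<^sub>R z' - z))) - lam')"
    by (simp add: lin_simps dsc_vinv[OF pos(5)] vec_eq_iff algebra_simps)
  have C5: "- Abar P (x - x') + Lap w (z - z') + dsc (vinv eta) (lam - lam') - c5 + Abar P x' - Lap w z'
       \<in> normal_cone posorth lam'
     \<longleftrightarrow> lam' = closest_point posorth (lam - dsc eta (c5 - Abar P (2 *\<^sub>R x' - x) + Lap w (2 *\<^sub>R z' - z)))"
    unfolding e5 using proj_pos[OF pos(5)] .
  show ?thesis
    unfolding om y c
    apply (simp only: PhiM_def diff_Pair prod.case opB_mem)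
    apply (simp only: C1 C2 C3 C4 C5 Gstep_def prod.case Let_def prod.inject)
    apply blast
    done
qed


lemma IT_eq: "IT_step lb ub r alpha a b xhat fhat e P w kappa tau ups rho delta eta om
   = Gstep lb ub P w tau ups rho delta eta om (opA r alpha a b xhat fhat e P w kappa om)"
  by (cases om) (simp add: IT_step_def Gstep_def opA_def Let_def lin_simps algebra_simps)

lemma Lap_sum_zero:
  assumes sym: "\<forall>i j. w i j = w j i"
  shows "(\<Sum>i\<in>UNIV. Lap w v $ i) = 0"
proof -
  have "(\<Sum>i\<in>UNIV. Lap w v $ i) = (\<Sum>i\<in>UNIV. \<Sum>j\<in>UNIV. w i j *\<^sub>R v$i) - (\<Sum>i\<in>UNIV. \<Sum>j\<in>UNIV. w i j *\<^sub>R v$j)"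
    by (simp add: Lap_def scaleR_diff_right sum_subtractf)
  also have "(\<Sum>i\<in>UNIV. \<Sum>j\<in>UNIV. w i j *\<^sub>R v$j) = (\<Sum>j\<in>UNIV. \<Sum>i\<in>UNIV. w i j *\<^sub>R v$j)"
    by (rule sum.swap)
  also have "\<dots> = (\<Sum>j\<in>UNIV. \<Sum>i\<in>UNIV. w j i *\<^sub>R v$j)" using sym by simp
  finally show ?thesis by simp
qed

lemma consensus:
  fixes v :: "'a::real_inner^'n::finite"
  assumes g: "connected_weighted_graph w" and L: "Lap w v = 0"
  shows "v$i = v$j"
proof -
  have sym: "\<forall>i j. w i j = w j i" and nn: "\<forall>i j. 0 \<le> w i j"
    and conn: "\<forall>i j. (i, j) \<in> {(p, q). 0 < w p q}\<^sup>*" using g by (auto simp: connected_weighted_graph_def)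
  define S where "S = (\<Sum>i\<in>UNIV. \<Sum>j\<in>UNIV. w i j * (v$i \<bullet> (v$i - v$j)))"
  have "S = (\<Sum>i\<in>UNIV. v$i \<bullet> Lap w v $ i)"
    by (simp add: S_def Lap_def inner_sum_right)
  then have S0: "S = 0" using L by simp
  have "S = (\<Sum>j\<in>UNIV. \<Sum>i\<in>UNIV. w i j * (v$i \<bullet> (v$i - v$j)))" unfolding S_def by (rule sum.swap)
  also have "\<dots> = (\<Sum>j\<in>UNIV. \<Sum>i\<in>UNIV. w j i * (v$i \<bullet> (v$i - v$j)))" using sym by simp
  finally have S1: "S = (\<Sum>i\<in>UNIV. \<Sum>j\<in>UNIV. w i j * (v$j \<bullet> (v$j - v$i)))" by simp
  have "(\<Sum>i\<in>UNIV. \<Sum>j\<in>UNIV. w i j * ((v$i - v$j) \<bullet> (v$i - v$j))) = S + S"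
    unfolding S_def
    apply (subst S1[unfolded S_def])
    by (simp add: sum.distrib[symmetric] inner_diff_left inner_diff_right inner_commute algebra_simps)
  then have sum0: "(\<Sum>i\<in>UNIV. \<Sum>j\<in>UNIV. w i j * ((v$i - v$j) \<bullet> (v$i - v$j))) = 0" using S0 by simp
  have nn2: "\<And>i j. 0 \<le> w i j * ((v$i - v$j) \<bullet> (v$i - v$j))" using nn by simp
  have "\<forall>i. (\<Sum>j\<in>UNIV. w i j * ((v$i - v$j) \<bullet> (v$i - v$j))) = 0"
    using sum0 by (subst (asm) sum_nonneg_eq_0_iff) (auto intro!: sum_nonneg nn2)
  then have z: "\<And>i j. w i j * ((v$i - v$j) \<bullet> (v$i - v$j)) = 0"
    by (subst (asm) sum_nonneg_eq_0_iff) (auto intro: nn2)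
  have edge: "v$p = v$q" if "0 < w p q" for p q
  proof -
    have "(v$p - v$q) \<bullet> (v$p - v$q) = 0" using z[of p q] that by simp
    then show ?thesis by simp
  qed
  have "(i, j) \<in> {(p, q). 0 < w p q}\<^sup>*" using conn by blast
  then show ?thesis
    by (induction rule: rtrancl_induct) (auto dest: edge)
qed


lemma mult_delta1: "(a::real) * (if c then 1 else 0) = (if c then a else 0)" by simp

lemma sum_dbar: "(\<Sum>n\<in>UNIV. dbar r xhat fhat e P $ n) = dvec r xhat fhat e (P::real^'n::finite^'h::finite)"
proof -
  have N: "real CARD('n) \<noteq> 0" by simp
  show ?thesis
  proof (rule vec_eq_iff[THEN iffD2], rule allI)
    fix i :: "('n,'h) midx"
    show "(\<Sum>n\<in>UNIV. dbar r xhat fhat e P $ n) $ i = dvec r xhat fhat e P $ i"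
    proof -
      consider (a) k where "i = Inl k" | (b) k where "i = Inr (Inl k)" | (c) l where "i = Inr (Inr (Inl l))"
        | (d) l where "i = Inr (Inr (Inr l))" by (metis sum.exhaust)
      then show ?thesis
        unfolding sum_component dbar_def dloc_def dvec_def
        apply cases
        apply (simp_all add: stack4_def cvec_def matrix_vector_mult_basis sum.distrib sum_subtractf
           N column_def matrix_vector_mult_diff_distrib sum_negf)
        apply (simp_all add: axis_def mult_delta1 matrix_vector_mult_def mult.commute)
        done
    qed
  qed
qed


lemma sum_Abar: "(\<Sum>n\<in>UNIV. Abar P x $ n) = Atilde P *v x"
  by (simp add: vec_eq_iff sum_component Abar_def column_def matrix_vector_mult_def mult.commute)

lemma AbarT_const: "v \<bullet> AbarT P (\<chi> n. gam) = gam \<bullet> (Atilde P *v v)"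
proof -
  have "v \<bullet> AbarT P (\<chi> n. gam) = (\<Sum>n\<in>UNIV. \<Sum>i\<in>UNIV. v$n * (Atilde P $ i $ n * gam $ i))"
    by (simp add: AbarT_def inner_vec_def column_def sum_distrib_left)
  also have "\<dots> = (\<Sum>i\<in>UNIV. \<Sum>n\<in>UNIV. v$n * (Atilde P $ i $ n * gam $ i))" by (rule sum.swap)
  also have "\<dots> = gam \<bullet> (Atilde P *v v)"
    by (simp add: inner_vec_def matrix_vector_mult_def sum_distrib_left mult_ac)
  finally show ?thesis .
qed

lemma Fgame_Fhat:
  assumes "sg = ((\<Sum>i\<in>UNIV. x$i) / real CARD('n::finite)) *\<^sub>R (1::real^'n)"
  shows "Fgame r alpha a b x = Fhat r alpha a b x sg"
  using assms by (simp add: Fgame_def Fhat_def Let_def vec_eq_iff)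


lemma part4:
  fixes P :: "real^'n::finite^'h::finite" and x :: "real^'n"
  assumes graph: "connected_weighted_graph w" and kappa: "kappa > 0"
    and zero: "0 \<in> (\<lambda>g. opA r alpha a b xhat fhat e P w kappa (x, psi, sg, z, lam) + g) ` opB lb ub P w (x, psi, sg, z, lam)"
  shows "sg = ((\<Sum>i\<in>UNIV. x$i) / real CARD('n)) *\<^sub>R (1::real^'n)
      \<and> (\<exists>gam. (\<forall>m. 0 \<le> gam$m) \<and> lam = (\<chi> n. gam))
      \<and> vGNE lb ub r alpha a b xhat fhat e P x"
proof -
  have sym: "\<forall>i j. w i j = w j i" using graph by (simp add: connected_weighted_graph_def)
  have N: "real CARD('n) > 0" by simp
  from zero obtain G where G: "G \<in> opB lb ub P w (x, psi, sg, z, lam)"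
     and G0: "0 = opA r alpha a b xhat fhat e P w kappa (x, psi, sg, z, lam) + G" by auto
  have "G = - opA r alpha a b xhat fhat e P w kappa (x, psi, sg, z, lam)" using G0
    by (simp add: eq_neg_iff_add_eq_0 add.commute)
  with G have mem: "(- Fhat r alpha a b x sg, - 0, - (kappa *\<^sub>R (sg - x)), - 0, - (dbar r xhat fhat e P + Lap w lam))
      \<in> opB lb ub P w (x, psi, sg, z, lam)" by (simp add: opA_def)
  then have m1: "- Fhat r alpha a b x sg - AbarT P lam \<in> normal_cone (Omega lb ub) x"
    and m2: "Lap w sg = 0" and m3: "- (kappa *\<^sub>R (sg - x)) = Lap w psi" and m4: "Lap w lam = 0"
    and m5: "- (dbar r xhat fhat e P + Lap w lam) + Abar P x - Lap w z \<in> normal_cone posorth lam"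
    unfolding opB_mem by (auto simp: neg_equal_iff_equal[of _ 0, simplified] eq_neg_iff_add_eq_0)
  have sgc: "sg$i = sg$j" for i j using consensus[OF graph m2] .
  have "(\<Sum>i\<in>UNIV. (- (kappa *\<^sub>R (sg - x))) $ i) = 0" unfolding m3 using Lap_sum_zero[OF sym] .
  then have "kappa * ((\<Sum>i\<in>UNIV. sg$i) - (\<Sum>i\<in>UNIV. x$i)) = 0"
    by (simp add: sum_negf sum_subtractf sum_distrib_left right_diff_distrib)
  then have sumeq: "(\<Sum>i\<in>UNIV. sg$i) = (\<Sum>i\<in>UNIV. x$i)" using kappa by simp
  have sgval: "sg$j = (\<Sum>i\<in>UNIV. x$i) / real CARD('n)" for j
  proof -
    have "(\<Sum>i\<in>UNIV. sg$i) = (\<Sum>i\<in>(UNIV::'n set). sg$j)" by (rule sum.cong[OF refl]) (rule sgc)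
    then have "(\<Sum>i\<in>UNIV. x$i) = real CARD('n) * sg$j" using sumeq by simp
    then show ?thesis using N by (simp add: field_simps)
  qed
  have SG: "sg = ((\<Sum>i\<in>UNIV. x$i) / real CARD('n)) *\<^sub>R (1::real^'n)"
    by (simp add: vec_eq_iff sgval)
  define gam where "gam = lam $ undefined"
  have LAM: "lam = (\<chi> n. gam)" unfolding gam_def using consensus[OF graph m4] by (simp add: vec_eq_iff)
  define h where "h = - (dbar r xhat fhat e P + Lap w lam) + Abar P x - Lap w z"
  have lampos: "lam \<in> posorth" and hc: "\<And>n m s. 0 \<le> s \<Longrightarrow> h$n$m * (s - lam$n$m) \<le> 0"
    using m5 unfolding h_def[symmetric] NC_pos by auto
  have lam0: "0 \<le> lam$n$m" for n m using lampos by (simp add: posorth_def)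
  have gam0: "\<forall>m. 0 \<le> gam$m" using lam0 by (simp add: gam_def)
  have hle: "h$n$m \<le> 0" for n m using hc[of "lam$n$m + 1" n m] lam0[of n m] by simp
  have hlam: "h$n$m * lam$n$m = 0" for n m
  proof -
    have "h$n$m * (0 - lam$n$m) \<le> 0" using hc[of 0 n m] by simp
    moreover have "h$n$m * lam$n$m \<le> 0" using hle[of n m] lam0[of n m] by (simp add: mult_nonpos_nonneg)
    ultimately show ?thesis by simp
  qed
  have hsum: "(\<Sum>n\<in>UNIV. h$n) = Atilde P *v x - dvec r xhat fhat e P"
    unfolding h_def using m4 Lap_sum_zero[OF sym, of z]
    by (simp add: sum_subtractf sum.distrib sum_negf sum_dbar sum_Abar)
  have feas: "(Atilde P *v x)$m - dvec r xhat fhat e P $ m \<le> 0" for m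
  proof -
    have "(Atilde P *v x)$m - dvec r xhat fhat e P $ m = (\<Sum>n\<in>UNIV. h$n$m)"
      using arg_cong[OF hsum, of "\<lambda>v. v$m"] by (simp add: sum_component)
    also have "\<dots> \<le> 0" by (intro sum_nonpos hle)
    finally show ?thesis .
  qed
  have compl: "gam$m * ((Atilde P *v x)$m - dvec r xhat fhat e P $ m) = 0" for m
  proof -
    have "(Atilde P *v x)$m - dvec r xhat fhat e P $ m = (\<Sum>n\<in>UNIV. h$n$m)"
      using arg_cong[OF hsum, of "\<lambda>v. v$m"] by (simp add: sum_component)
    then have "gam$m * ((Atilde P *v x)$m - dvec r xhat fhat e P $ m) = (\<Sum>n\<in>UNIV. h$n$m * lam$n$m)"
      by (simp add: sum_distrib_left LAM mult.commute)
    also have "\<dots> = 0" by (simp add: hlam)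
    finally show ?thesis .
  qed
  have xO: "x \<in> Omega lb ub" using m1 by (simp add: normal_cone_def split: if_splits)
  have xK: "x \<in> Kset lb ub r xhat fhat e P" using xO feas by (simp add: Kset_def)
  have VI: "0 \<le> (y - x) \<bullet> Fgame r alpha a b x" if y: "y \<in> Kset lb ub r xhat fhat e P" for y
  proof -
    have yO: "y \<in> Omega lb ub" and yc: "\<And>i. (Atilde P *v y)$i \<le> dvec r xhat fhat e P $ i"
      using y by (auto simp: Kset_def)
    have "(- Fhat r alpha a b x sg - AbarT P lam) \<bullet> (y - x) \<le> 0"
      using m1 xO yO by (simp add: normal_cone_def)
    then have 1: "- ((y - x) \<bullet> Fhat r alpha a b x sg) - (y - x) \<bullet> AbarT P lam \<le> 0"
      by (simp add: inner_diff_left inner_diff_right inner_minus_left inner_minus_right inner_commute)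
    have "(y - x) \<bullet> AbarT P lam = gam \<bullet> (Atilde P *v (y - x))" unfolding LAM by (rule AbarT_const)
    also have "\<dots> = (\<Sum>m\<in>UNIV. gam$m * ((Atilde P *v y)$m - (Atilde P *v x)$m))"
      by (simp add: inner_vec_def matrix_vector_mult_diff_distrib)
    also have "\<dots> = (\<Sum>m\<in>UNIV. gam$m * ((Atilde P *v y)$m - dvec r xhat fhat e P $ m))"
    proof (rule sum.cong)
      fix m
      show "gam$m * ((Atilde P *v y)$m - (Atilde P *v x)$m) = gam$m * ((Atilde P *v y)$m - dvec r xhat fhat e P $ m)"
        using compl[of m] by (simp add: right_diff_distrib)
    qed simp
    also have "\<dots> \<le> 0"
      by (intro sum_nonpos mult_nonneg_nonpos) (use gam0 yc in auto)
    finally have "(y - x) \<bullet> AbarT P lam \<le> 0" .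
    then show ?thesis using 1 Fgame_Fhat[OF SG] by simp
  qed
  show ?thesis using SG LAM gam0 xK VI by (auto simp: vGNE_def)
qed

theorem theorem1:
  fixes r alpha lb ub kappa :: real
    and a b xhat e tau ups rho delta eta :: "real^'n::finite"
    and fhat :: "real^'h::finite"
    and Pmat :: "real^'n^'h"
    and w :: "'n \<Rightarrow> 'n \<Rightarrow> real"
  assumes N2: "CARD('n) \<ge> 2"
    and r: "r \<ge> 0" and alpha: "alpha > 0"
    and ab: "\<forall>n. a$n > 0" "\<forall>n. b$n > 0"
    and bnds: "lb < ub"
    and fhat: "\<forall>l. fhat$l \<ge> 0"
    and slater: "\<exists>x\<in>Omega lb ub. \<forall>i. (Atilde Pmat *v x)$i < dvec r xhat fhat e Pmat $ i"
    and graph: "connected_weighted_graph w"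
    and kappa: "kappa > 0"
    and steps: "\<forall>n. tau$n > 0" "\<forall>n. ups$n > 0" "\<forall>n. rho$n > 0" "\<forall>n. delta$n > 0" "\<forall>n. eta$n > 0"
    and PD: "\<forall>om::('n,'h) state. om \<noteq> 0 \<longrightarrow> 0 < om \<bullet> PhiM Pmat w tau ups rho delta eta om"
  defines "PP \<equiv> PhiM Pmat w tau ups rho delta eta"
    and "AA \<equiv> opA r alpha a b xhat fhat e Pmat w kappa"
    and "BB \<equiv> opB lb ub Pmat w"
    and "IT \<equiv> IT_step lb ub r alpha a b xhat fhat e Pmat w kappa tau ups rho delta eta"
  shows
    "(\<forall>x. \<exists>!y. y \<in> resV PP BB x)
   \<and> (\<forall>x psi sg z lam. x \<in> Omega lb ub \<and> lam \<in> posorth \<longrightarrow>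
        resV PP BB (fwdU PP AA (x, psi, sg, z, lam)) = {IT (x, psi, sg, z, lam)}
      \<and> 0 \<in> (\<lambda>g. AA (x, psi, sg, z, lam) + g + PP (IT (x, psi, sg, z, lam) - (x, psi, sg, z, lam)))
              ` BB (IT (x, psi, sg, z, lam)))
   \<and> (\<forall>om. (om \<in> resV PP BB (fwdU PP AA om) \<longleftrightarrow> 0 \<in> (\<lambda>g. AA om + g) ` BB om)
         \<and> (IT om = om \<longleftrightarrow> 0 \<in> (\<lambda>g. AA om + g) ` BB om))
   \<and> (\<forall>x psi sg z lam. 0 \<in> (\<lambda>g. AA (x, psi, sg, z, lam) + g) ` BB (x, psi, sg, z, lam) \<longrightarrow>
        sg = ((\<Sum>i\<in>UNIV. x$i) / real CARD('n)) *\<^sub>R (1::real^'n)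
      \<and> (\<exists>gam. (\<forall>m. 0 \<le> gam$m) \<and> lam = (\<chi> n. gam))
      \<and> vGNE lb ub r alpha a b xhat fhat e Pmat x)"
proof -
  have lu: "lb \<le> ub" using bnds by simp
  have lin: "linear PP" unfolding PP_def by (rule PhiM_linear)
  have inj: "inj PP"
    unfolding linear_injective_0[OF lin]
  proof (intro allI impI)
    fix om assume "PP om = 0"
    then show "om = 0" using PD unfolding PP_def by (metis inner_zero_right less_irrefl)
  qed
  have surj: "surj PP" using linear_inj_imp_surj[OF lin inj] .
  have bij: "bij PP" using inj surj by (simp add: bij_def)
  have resV_iff: "y \<in> resV PP BB x \<longleftrightarrow> PP (x - y) \<in> BB y" for x y
  proof -
    have "y \<in> resV PP BB x \<longleftrightarrow> (\<exists>g\<in>BB y. x - y = inv PP g)"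
      unfolding resV_def image_iff mem_Collect_eq
      by (metis (no_types, lifting) add_diff_cancel_left' diff_add_cancel)
    also have "\<dots> \<longleftrightarrow> (\<exists>g\<in>BB y. PP (x - y) = g)" by (simp add: bij_inv_eq_iff[OF bij])
    also have "\<dots> \<longleftrightarrow> PP (x - y) \<in> BB y" by auto
    finally show ?thesis .
  qed
  have fwd: "PP (fwdU PP AA om - y) = PP (om - y) - AA om" for om y
  proof -
    have "fwdU PP AA om - y = (om - y) - inv PP (AA om)" by (simp add: fwdU_def algebra_simps)
    then show ?thesis by (simp add: linear_diff[OF lin] surj_f_inv_f[OF surj])
  qed
  have key: "PP (om - y) - c \<in> BB y \<longleftrightarrow> y = Gstep lb ub Pmat w tau ups rho delta eta om c" for om y c
    unfolding PP_def BB_def using KEY[OF steps lu] .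
  have ITe: "IT om = Gstep lb ub Pmat w tau ups rho delta eta om (AA om)" for om
    unfolding IT_def AA_def by (rule IT_eq)
  have res_fwd: "resV PP BB (fwdU PP AA om) = {IT om}" for om
  proof -
    have "y \<in> resV PP BB (fwdU PP AA om) \<longleftrightarrow> y = IT om" for y
      using resV_iff[of y "fwdU PP AA om"] fwd[of om y] key[of om y "AA om"] ITe[of om] by simp
    then show ?thesis by blast
  qed
  have zero_iff: "0 \<in> (\<lambda>g. AA om + g) ` BB om \<longleftrightarrow> IT om = om" for om
  proof -
    have "0 \<in> (\<lambda>g. AA om + g) ` BB om \<longleftrightarrow> - AA om \<in> BB om"
    proof
      assume "0 \<in> (\<lambda>g. AA om + g) ` BB om"
      then obtain g where "g \<in> BB om" "0 = AA om + g" by auto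
      then show "- AA om \<in> BB om" by (metis minus_unique)
    next
      assume "- AA om \<in> BB om"
      then show "0 \<in> (\<lambda>g. AA om + g) ` BB om" by (rule image_eqI[rotated]) simp
    qed
    also have "\<dots> \<longleftrightarrow> PP (om - om) - AA om \<in> BB om" using linear_0[OF lin] by simp
    also have "\<dots> \<longleftrightarrow> IT om = om" using key[of om om "AA om"] ITe[of om] by auto
    finally show ?thesis .
  qed
  have P1: "\<forall>x. \<exists>!y. y \<in> resV PP BB x"
  proof
    fix x
    have "y \<in> resV PP BB x \<longleftrightarrow> y = Gstep lb ub Pmat w tau ups rho delta eta x 0" for y
      using resV_iff key[of x y 0] by simp
    then show "\<exists>!y. y \<in> resV PP BB x" by auto
  qed
  have P2: "0 \<in> (\<lambda>g. AA om + g + PP (IT om - om)) ` BB (IT om)" for om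
  proof -
    have g: "PP (om - IT om) - AA om \<in> BB (IT om)" using key[of om "IT om" "AA om"] ITe[of om] by simp
    have "AA om + (PP (om - IT om) - AA om) + PP (IT om - om) = PP ((om - IT om) + (IT om - om))"
      by (simp add: linear_add[OF lin, symmetric])
    also have "\<dots> = 0" using linear_0[OF lin] by simp
    finally show ?thesis using g by (metis (no_types, lifting) image_eqI)
  qed
  have P4: "0 \<in> (\<lambda>g. AA (x, psi, sg, z, lam) + g) ` BB (x, psi, sg, z, lam) \<Longrightarrow>
        sg = ((\<Sum>i\<in>UNIV. x$i) / real CARD('n)) *\<^sub>R (1::real^'n)
      \<and> (\<exists>gam. (\<forall>m. 0 \<le> gam$m) \<and> lam = (\<chi> n. gam))
      \<and> vGNE lb ub r alpha a b xhat fhat e Pmat x" for x psi sg z lam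
    unfolding AA_def BB_def by (rule part4[OF graph kappa])
  show ?thesis
    using P1 P2 P4 res_fwd zero_iff by auto
qed

end
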